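(* Let $\big(m_{i,j}^{s,t}\big)_{i,j,s,t\ge 0}$ and $\big(\phi_i^{s,t}\big)_{i,s,t\ge0}$ be real numbers with $m_{i,j}^{s,t}=m_{j,i}^{s,t}$ for all $i,j,s,t$, satisfying $$m_{i,j}^{s+1,t}=m_{i+1,j+1}^{s,t},\qquad m_{i,j}^{s,t+1}=m_{i,j}^{s,t}-\phi_i^{s,t}\phi_j^{s,t},\qquad \phi_i^{s+1,t}=\phi_{i+1}^{s,t}$$ for all $i,j,s,t\ge 0$. Put $\tau_n^{s,t}=\det\big(m_{i,j}^{s,t}\big)_{i,j=0}^{n-1}$ for $n\ge1$ and $\tau_0^{s,t}=1$. Then for all $n\ge 1$ and $s,t\ge 0$, $$ \begin{aligned} &4\left(\tau_{n}^{s+1,t}\tau_n^{s,t}-\tau_{n+1}^{s,t}\tau_{n-1}^{s+1,t}\right)\left(\tau_n^{s+1,t+1}\tau_n^{s,t+1}-\tau_{n+1}^{s,t+1}\tau_{n-1}^{s+1,t+1}\right)\\ &\qquad=\left(\tau_n^{s+1,t}\tau_n^{s,t+1}+\tau_n^{s+1,t+1}\tau_n^{s,t}-\tau_{n+1}^{s,t+1}\tau_{n-1}^{s+1,t}-\tau_{n+1}^{s,t}\tau_{n-1}^{s+1,t+1}\right)^2. \end{aligned} $$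
   Context: The displayed quartic equation is the discrete CKP equation. The empty determinant $\tau_0^{s,t}$ equals $1$. *)

theory Defs
  imports "Jordan_Normal_Form.Determinant"
begin

definition tau :: "(nat \<Rightarrow> nat \<Rightarrow> nat \<Rightarrow> nat \<Rightarrow> real) \<Rightarrow> nat \<Rightarrow> nat \<Rightarrow> nat \<Rightarrow> real" where
  "tau m n s t = det (mat n n (\<lambda>(i, j). m i j s t))"

lemma tau_0: "tau m 0 s t = 1"
  unfolding tau_def by (simp add: det_def)

end

theory Submission
  imports Defs "Jordan_Normal_Form.Char_Poly"
begin

definition mm :: "(nat \<Rightarrow> nat \<Rightarrow> real) \<Rightarrow> nat list \<Rightarrow> real mat" where
  "mm g xs = mat (length xs) (length xs) (\<lambda>(i,j). g (xs!i) (xs!j))"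

definition minor :: "(nat \<Rightarrow> nat \<Rightarrow> real) \<Rightarrow> nat list \<Rightarrow> real" where
  "minor g xs = det (mm g xs)"

lemma minor_permute:
  assumes p: "p permutes {..<length xs}"
  shows "minor g (permute_list p xs) = minor g xs"
proof -
  let ?k = "length xs"
  define A where "A = mm g xs"
  have A: "A \<in> carrier_mat ?k ?k" unfolding A_def mm_def by auto
  have p': "p permutes {0..<?k}" using p by (simp add: lessThan_atLeast0)
  define B1 where "B1 = mat ?k ?k (\<lambda>(i,j). A $$ (p i, j))"
  have d1: "det B1 = signof p * det A" unfolding B1_def by (rule det_permute_rows[OF A p'])
  have B1: "B1 \<in> carrier_mat ?k ?k" unfolding B1_def by auto
  define C where "C = mat ?k ?k (\<lambda>(i,j). transpose_mat B1 $$ (p i, j))"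
  have d2: "det C = signof p * det (transpose_mat B1)" unfolding C_def
    by (rule det_permute_rows[OF _ p'], insert B1, auto)
  have C: "C \<in> carrier_mat ?k ?k" unfolding C_def by auto
  have "transpose_mat C = mm g (permute_list p xs)"
    unfolding C_def B1_def A_def mm_def
    by (rule eq_matI, insert p', auto simp: permute_list_def permutes_in_image)
  hence "minor g (permute_list p xs) = det C" unfolding minor_def using det_transpose[OF C] by simp
  also have "\<dots> = (signof p * signof p) * det A" using d1 d2 det_transpose[OF B1] by simp
  also have "signof p * signof p = (1::real)" by (cases p rule: sign_cases) auto
  finally show ?thesis unfolding A_def minor_def by simp
qed

lemma minor_mset:
  assumes "mset xs = mset ys"
  shows "minor g xs = minor g ys"
proof -
  from assms obtain p where "p permutes {..<length ys}" "permute_list p ys = xs"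
    by (rule mset_eq_permutation)
  thus ?thesis using minor_permute by metis
qed


lemma minor_schur:
  fixes g :: "nat \<Rightarrow> nat \<Rightarrow> real"
  assumes dP: "det (mm g ks) \<noteq> 0"
  shows "minor g (ks @ ss) = det (mm g ks) *
     minor (\<lambda>i j. g i j - (\<Sum> b \<in> {0..<length ks}. (\<Sum> a \<in> {0..<length ks}.
        g i (ks!a) * ((1 / det (mm g ks)) \<cdot>\<^sub>m adj_mat (mm g ks)) $$ (a,b)) * g (ks!b) j)) ss"
proof -
  define k where "k = length ks"
  define l where "l = length ss"
  define P where "P = mm g ks"
  define Q where "Q = (1 / det P) \<cdot>\<^sub>m adj_mat P"
  define B where "B = mat k l (\<lambda>(a,j). g (ks!a) (ss!j))"
  define C where "C = mat l k (\<lambda>(i,b). g (ss!i) (ks!b))"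
  define D where "D = mm g ss"
  define S where "S = D - C * Q * B"
  have P: "P \<in> carrier_mat k k" unfolding P_def mm_def k_def by auto
  have Q: "Q \<in> carrier_mat k k" unfolding Q_def using adj_mat[OF P] by auto
  have B: "B \<in> carrier_mat k l" unfolding B_def by auto
  have C: "C \<in> carrier_mat l k" unfolding C_def by auto
  have D: "D \<in> carrier_mat l l" unfolding D_def mm_def l_def by auto
  have S: "S \<in> carrier_mat l l" unfolding S_def using C Q B D by auto
  have CQ: "C * Q \<in> carrier_mat l k" using C Q by auto
  have QP: "Q * P = 1\<^sub>m k"
    unfolding Q_def using adj_mat[OF P] dP[folded P_def]
    by (subst mult_smult_assoc_mat[OF adj_mat(1)[OF P] P], auto)
  have CQP: "C * Q * P = C" using C Q P QP by (simp add: assoc_mult_mat[OF C Q P])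
  have CQBS: "C * Q * B + S = D"
    unfolding S_def using C Q B D by (intro eq_matI, auto)
  define M1 where "M1 = four_block_mat (1\<^sub>m k) (0\<^sub>m k l) (C * Q) (1\<^sub>m l)"
  define M2 where "M2 = four_block_mat P B (0\<^sub>m l k) S"
  have "M1 * M2 = four_block_mat (1\<^sub>m k * P + 0\<^sub>m k l * 0\<^sub>m l k) (1\<^sub>m k * B + 0\<^sub>m k l * S)
      (C * Q * P + 1\<^sub>m l * 0\<^sub>m l k) (C * Q * B + 1\<^sub>m l * S)"
    unfolding M1_def M2_def by (rule mult_four_block_mat, insert P B S CQ, auto)
  also have "\<dots> = four_block_mat P B C D" using CQP CQBS P B C S by simp
  also have "\<dots> = mm g (ks @ ss)"
    unfolding P_def B_def C_def D_def mm_def k_def l_def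
    by (rule eq_matI, auto simp: four_block_mat_def nth_append Let_def)
  finally have eq: "mm g (ks @ ss) = M1 * M2" by simp
  have d1: "det M1 = 1" unfolding M1_def
    by (subst det_four_block_mat_upper_right_zero[of _ k _ l], insert CQ, auto)
  have d2: "det M2 = det P * det S" unfolding M2_def
    by (rule det_four_block_mat_lower_left_zero[OF P B _ S], simp)
  have M1: "M1 \<in> carrier_mat (k+l) (k+l)" unfolding M1_def using CQ by auto
  have M2: "M2 \<in> carrier_mat (k+l) (k+l)" unfolding M2_def using P B S by auto
  have "minor g (ks @ ss) = det P * det S"
    unfolding minor_def eq det_mult[OF M1 M2] d1 d2 by simp
  also have "S = mm (\<lambda>i j. g i j - (\<Sum> b \<in> {0..<length ks}. (\<Sum> a \<in> {0..<length ks}.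
        g i (ks!a) * Q $$ (a,b)) * g (ks!b) j)) ss"
    unfolding S_def D_def mm_def
    by (rule eq_matI, insert C Q B, auto simp: C_def B_def l_def k_def scalar_prod_def sum_distrib_right)
  finally show ?thesis unfolding minor_def Q_def P_def by simp
qed

lemma det2: assumes A: "(A :: real mat) \<in> carrier_mat 2 2"
  shows "det A = A $$ (0,0) * A $$ (1,1) - A $$ (0,1) * A $$ (1,0)"
proof -
  have "det A = (\<Sum>j<2. A $$ (0,j) * cofactor A 0 j)" by (rule laplace_expansion_row[OF A], simp)
  also have "\<dots> = A $$ (0,0) * cofactor A 0 0 + A $$ (0,1) * cofactor A 0 1"
    by (simp add: numeral_2_eq_2)
  also have "cofactor A 0 0 = A $$ (1,1)" unfolding cofactor_def
    by (subst det_single, insert A, auto simp: mat_delete_def)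
  also have "cofactor A 0 1 = - A $$ (1,0)" unfolding cofactor_def
    by (subst det_single, insert A, auto simp: mat_delete_def)
  finally show ?thesis by simp
qed

lemma det3: assumes A: "(A :: real mat) \<in> carrier_mat 3 3"
  shows "det A = A $$ (0,0) * (A $$ (1,1) * A $$ (2,2) - A $$ (1,2) * A $$ (2,1))
     - A $$ (0,1) * (A $$ (1,0) * A $$ (2,2) - A $$ (1,2) * A $$ (2,0))
     + A $$ (0,2) * (A $$ (1,0) * A $$ (2,1) - A $$ (1,1) * A $$ (2,0))"
proof -
  have "det A = (\<Sum>j<3. A $$ (0,j) * cofactor A 0 j)" by (rule laplace_expansion_row[OF A], simp)
  also have "\<dots> = A $$ (0,0) * cofactor A 0 0 + A $$ (0,1) * cofactor A 0 1 + A $$ (0,2) * cofactor A 0 2"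
    by (simp add: numeral_3_eq_3 numeral_2_eq_2)
  also have "cofactor A 0 0 = A $$ (1,1) * A $$ (2,2) - A $$ (1,2) * A $$ (2,1)" unfolding cofactor_def
    by (subst det2, insert A, auto simp: mat_delete_def numeral_2_eq_2)
  also have "cofactor A 0 1 = - (A $$ (1,0) * A $$ (2,2) - A $$ (1,2) * A $$ (2,0))" unfolding cofactor_def
    by (subst det2, insert A, auto simp: mat_delete_def numeral_2_eq_2)
  also have "cofactor A 0 2 = A $$ (1,0) * A $$ (2,1) - A $$ (1,1) * A $$ (2,0)" unfolding cofactor_def
    by (subst det2, insert A, auto simp: mat_delete_def numeral_2_eq_2)
  finally show ?thesis by (simp add: algebra_simps)
qed

lemma minor1: "minor h [p] = h p p"
  unfolding minor_def mm_def by (subst det_single, auto)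
lemma minor2: "minor h [p,q] = h p p * h q q - h p q * h q p"
  unfolding minor_def mm_def by (subst det2, auto)
lemma minor3: "minor h [p,q,r] = h p p * (h q q * h r r - h q r * h r q)
     - h p q * (h q p * h r r - h q r * h r p) + h p r * (h q p * h r q - h q q * h r p)"
  unfolding minor_def mm_def by (subst det3, auto simp: numeral_3_eq_3)

lemma adj_sym:
  assumes P: "P \<in> carrier_mat k k" and sym: "\<And>i j. i < k \<Longrightarrow> j < k \<Longrightarrow> P $$ (i,j) = P $$ (j,i)"
    and ij: "i < k" "j < k"
  shows "adj_mat P $$ (i,j) = adj_mat P $$ (j,i)"
proof -
  have "mat_delete P i j = transpose_mat (mat_delete P j i)"
    by (rule eq_matI, insert P sym, auto simp: mat_delete_def)
  hence "det (mat_delete P i j) = det (mat_delete P j i)"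
    using det_transpose[OF mat_delete_carrier[OF P]] by simp
  thus ?thesis unfolding adj_mat_def cofactor_def using P ij by (simp add: add.commute)
qed

lemma hyper_alg:
  fixes x y z u v w d :: real
  shows "4 * (d*y * (d*x) - d*(x*y - u*u) * d) * (d*(y*z - w*w) * (d*(x*z - v*v))
     - d*(x * (y * z - w * w) - u * (u * z - w * v) + v * (u * w - y * v)) * (d*z))
   = (d*y * (d*(x*z - v*v)) + d*(y*z - w*w) * (d*x)
      - d*(x * (y * z - w * w) - u * (u * z - w * v) + v * (u * w - y * v)) * d
      - d*(x*y - u*u) * (d*z))^2"
  by (simp add: power2_eq_square algebra_simps)


definition Fexpr :: "(nat \<Rightarrow> nat \<Rightarrow> real) \<Rightarrow> nat list \<Rightarrow> nat \<Rightarrow> nat \<Rightarrow> nat \<Rightarrow> real" where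
  "Fexpr g K p q r = 4 * (minor g (K@[q]) * minor g (K@[p]) - minor g (K@[p,q]) * minor g K)
     * (minor g (K@[q,r]) * minor g (K@[p,r]) - minor g (K@[p,q,r]) * minor g (K@[r]))
   - (minor g (K@[q]) * minor g (K@[p,r]) + minor g (K@[q,r]) * minor g (K@[p])
      - minor g (K@[p,q,r]) * minor g K - minor g (K@[p,q]) * minor g (K@[r]))^2"

lemma core_nz:
  fixes g :: "nat \<Rightarrow> nat \<Rightarrow> real"
  assumes sym: "\<And>i j. g i j = g j i" and nz: "minor g K \<noteq> 0"
  shows "Fexpr g K p q r = 0"
proof -
  define k where "k = length K"
  define P where "P = mm g K"
  define d where "d = det P"
  define Q where "Q = (1 / d) \<cdot>\<^sub>m adj_mat P"
  define h where "h = (\<lambda>i j. g i j - (\<Sum> b \<in> {0..<k}. (\<Sum> a \<in> {0..<k}.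
        g i (K!a) * Q $$ (a,b)) * g (K!b) j))"
  have P: "P \<in> carrier_mat k k" unfolding P_def mm_def k_def by auto
  have schur: "minor g (K @ ss) = d * minor h ss" for ss
    using minor_schur[of g K ss] nz unfolding minor_def d_def P_def h_def Q_def k_def by simp
  have dK: "minor g K = d" unfolding d_def P_def minor_def ..
  have Qs: "Q $$ (a,b) = Q $$ (b,a)" if "a < k" "b < k" for a b
    unfolding Q_def using adj_mat(1)[OF P] that adj_sym[OF P _ that]
    by (auto simp: P_def mm_def k_def sym)
  have T: "(\<Sum> b \<in> {0..<k}. (\<Sum> a \<in> {0..<k}. g i (K!a) * Q $$ (a,b)) * g (K!b) j)
      = (\<Sum> b \<in> {0..<k}. (\<Sum> a \<in> {0..<k}. g j (K!a) * Q $$ (a,b)) * g (K!b) i)" for i j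
  proof -
    have "(\<Sum> b \<in> {0..<k}. (\<Sum> a \<in> {0..<k}. g i (K!a) * Q $$ (a,b)) * g (K!b) j)
       = (\<Sum> b \<in> {0..<k}. \<Sum> a \<in> {0..<k}. g i (K!a) * Q $$ (a,b) * g (K!b) j)"
      by (simp add: sum_distrib_right)
    also have "\<dots> = (\<Sum> a \<in> {0..<k}. \<Sum> b \<in> {0..<k}. g i (K!a) * Q $$ (a,b) * g (K!b) j)"
      by (rule sum.swap)
    also have "\<dots> = (\<Sum> a \<in> {0..<k}. \<Sum> b \<in> {0..<k}. g j (K!b) * Q $$ (b,a) * g (K!a) i)"
      by (rule sum.cong[OF refl], rule sum.cong[OF refl], auto simp: Qs sym)
    also have "\<dots> = (\<Sum> b \<in> {0..<k}. (\<Sum> a \<in> {0..<k}. g j (K!a) * Q $$ (a,b)) * g (K!b) i)"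
      by (simp add: sum_distrib_right)
    finally show ?thesis .
  qed
  have hs: "h i j = h j i" for i j unfolding h_def using T[of i j] sym[of i j] by simp
  show ?thesis unfolding Fexpr_def schur dK minor1 minor2 minor3
    using hyper_alg[of d "h q q" "h p p" "h p q" "h r r" "h q r" "h p r"]
    unfolding hs[of q p] hs[of r p] hs[of r q] by simp
qed


definition pert :: "(nat \<Rightarrow> nat \<Rightarrow> real) \<Rightarrow> real \<Rightarrow> nat \<Rightarrow> nat \<Rightarrow> real" where
  "pert g e i j = g i j + e * (if i = j then 1 else 0)"

lemma minor_pert_cont: "isCont (\<lambda>e. minor (pert g e) xs) x"
proof -
  let ?n = "length xs"
  have eq: "(\<lambda>e. minor (pert g e) xs) = (\<lambda>e. \<Sum> p \<in> {p. p permutes {0..<?n}}. signof p *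
     (\<Prod> i = 0..<?n. pert g e (xs!i) (xs!(p i))))"
  proof
    fix e
    show "minor (pert g e) xs = (\<Sum> p \<in> {p. p permutes {0..<?n}}. signof p *
     (\<Prod> i = 0..<?n. pert g e (xs!i) (xs!(p i))))"
      unfolding minor_def
      by (subst det_def'[of _ ?n], force simp: mm_def, rule sum.cong[OF refl],
        auto intro!: prod.cong simp: mm_def permutes_in_image)
  qed
  show ?thesis unfolding eq pert_def by (intro continuous_intros)
qed

lemma minor_pert_finite: assumes dK: "distinct K" shows "finite {e. minor (pert g e) K = 0}"
proof -
  let ?k = "length K"
  define M where "M = - mm g K"
  have M: "M \<in> carrier_mat ?k ?k" unfolding M_def mm_def by auto
  have ev: "poly (char_poly M) e = minor (pert g e) K" for e
    unfolding char_poly_def minor_def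
    by (rule poly_det_cong[of _ ?k], insert M, auto simp: mm_def M_def char_poly_matrix_def pert_def nth_eq_iff_index_eq[OF dK])
  have "char_poly M \<noteq> 0" using degree_monic_char_poly[OF M] by auto
  hence "finite {e. poly (char_poly M) e = 0}" by (rule poly_roots_finite)
  thus ?thesis unfolding ev .
qed

lemma zero_by_cont:
  fixes f :: "real \<Rightarrow> real"
  assumes c: "isCont f 0" and Z: "finite Z" and z: "\<And>e. e \<notin> Z \<Longrightarrow> f e = 0"
  shows "f 0 = 0"
proof -
  have "eventually (\<lambda>e. \<forall>y\<in>Z. e \<noteq> y) (at (0::real))"
    by (rule eventually_ball_finite[OF Z], auto intro: eventually_neq_at_within)
  hence ev: "eventually (\<lambda>e. f e = 0) (at (0::real))"
    by eventually_elim (use z in auto)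
  have "f \<midarrow>0\<rightarrow> f 0" using c by (simp add: isCont_def)
  moreover note tendsto_cong[OF ev, where c="f 0"]
  ultimately have "((\<lambda>_::real. 0::real) \<longlongrightarrow> f 0) (at 0)" by simp
  thus ?thesis by (simp add: tendsto_const_iff)
qed


lemma core:
  fixes g :: "nat \<Rightarrow> nat \<Rightarrow> real"
  assumes sym: "\<And>i j. g i j = g j i" and dK: "distinct K"
  shows "Fexpr g K p q r = 0"
proof -
  define f where "f = (\<lambda>e. Fexpr (pert g e) K p q r)"
  have c: "isCont f 0" unfolding f_def Fexpr_def
    by (intro continuous_intros minor_pert_cont)
  have "f e = 0" if "e \<notin> {e. minor (pert g e) K = 0}" for e
    unfolding f_def by (rule core_nz, insert that sym, auto simp: pert_def)
  from zero_by_cont[OF c minor_pert_finite[OF dK] this] have "f 0 = 0" by auto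
  moreover have "pert g 0 = g" by (auto simp: pert_def fun_eq_iff)
  ultimately show ?thesis unfolding f_def by simp
qed

lemma tau_minor:
  assumes "\<And>i j. i < length xs \<Longrightarrow> j < length xs \<Longrightarrow> f i j = g (xs!i) (xs!j)"
  shows "det (mat (length xs) (length xs) (\<lambda>(i,j). f i j)) = minor g xs"
  unfolding minor_def mm_def by (rule arg_cong[of _ _ det], rule eq_matI, insert assms, auto)

lemma minor_border:
  fixes G :: "nat \<Rightarrow> nat \<Rightarrow> real"
  assumes "G N N = 1"
  shows "minor G (N # xs) = minor (\<lambda>i j. G i j - G i N * G N j) xs"
proof -
  have d: "det (mm G [N]) = 1" using assms unfolding mm_def by (subst det_single, auto)
  have a: "((1::real) \<cdot>\<^sub>m adj_mat (mm G [N])) $$ (0,0) = 1"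
    unfolding adj_mat_def cofactor_def mm_def by (simp add: mat_delete_def)
  show ?thesis using minor_schur[of G "[N]" xs] d a by simp
qed


definition Gb :: "(nat \<Rightarrow> nat \<Rightarrow> nat \<Rightarrow> nat \<Rightarrow> real) \<Rightarrow> (nat \<Rightarrow> nat \<Rightarrow> nat \<Rightarrow> real)
   \<Rightarrow> nat \<Rightarrow> nat \<Rightarrow> nat \<Rightarrow> nat \<Rightarrow> nat \<Rightarrow> real" where
  "Gb m phi n s t i j = (if i \<le> n \<and> j \<le> n then m i j s t else if i \<le> n then phi i s t
     else if j \<le> n then phi j s t else 1)"

lemma Gb_sym: assumes "\<And>i j. m i j s t = m j i s t" shows "Gb m phi n s t i j = Gb m phi n s t j i"
  unfolding Gb_def using assms by auto

lemma Gb_v: "i \<le> n \<Longrightarrow> j \<le> n \<Longrightarrow> Gb m phi n s t i j = m i j s t"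
  unfolding Gb_def by simp

lemma Gb'_v:
  assumes step_m: "\<And>i j s t. m i j s (Suc t) = m i j s t - phi i s t * phi j s t"
  shows "i \<le> n \<Longrightarrow> j \<le> n \<Longrightarrow>
    Gb m phi n s t i j - Gb m phi n s t i (Suc n) * Gb m phi n s t (Suc n) j = m i j s (Suc t)"
  unfolding Gb_def by (simp add: step_m)

lemma Gb_border: "minor (\<lambda>i j. Gb m phi n s t i j - Gb m phi n s t i (Suc n) * Gb m phi n s t (Suc n) j) xs
   = minor (Gb m phi n s t) (Suc n # xs)"
  using minor_border[of "Gb m phi n s t" "Suc n" xs] by (simp add: Gb_def)

lemma lists_n:
  assumes n: "n \<ge> 1"
  shows "[0..<n] = 0 # [1..<n]" "[1..<n+1] = [1..<n] @ [n]" "[0..<n+1] = 0 # [1..<n] @ [n]"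
  using n upt_conv_Cons[of 0 n] upt_conv_Cons[of 0 "n+1"] by simp_all

lemma tau_shift0:
  assumes "\<And>i j. i \<le> n \<Longrightarrow> j \<le> n \<Longrightarrow> f i j = m i j s' t'"
    and that: "k \<le> n + 1"
  shows "tau m k s' t' = minor f [0..<k]"
proof -
  have "tau m k s' t' = det (mat (length [0..<k]) (length [0..<k]) (\<lambda>(i,j). m i j s' t'))"
    unfolding tau_def by (simp del: upt_Suc)
  also have "\<dots> = minor f [0..<k]" by (rule tau_minor, insert that assms, auto simp del: upt_Suc)
  finally show ?thesis .
qed

lemma tau_shift1:
  assumes "\<And>i j. i \<le> n \<Longrightarrow> j \<le> n \<Longrightarrow> f i j = m i j s' t'"
    and shift_m: "\<And>i j s t. m i j (Suc s) t = m (Suc i) (Suc j) s t"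
    and that: "k \<le> n"
  shows "tau m k (Suc s') t' = minor f [1..<k+1]"
proof -
  have "tau m k (Suc s') t' = det (mat (length [1..<k+1]) (length [1..<k+1]) (\<lambda>(i,j). m i j (Suc s') t'))"
    unfolding tau_def by (simp del: upt_Suc)
  also have "\<dots> = minor f [1..<k+1]" by (rule tau_minor, insert that assms, auto simp del: upt_Suc)
  finally show ?thesis .
qed

theorem corollary3p5:
  fixes m :: "nat \<Rightarrow> nat \<Rightarrow> nat \<Rightarrow> nat \<Rightarrow> real"
    and phi :: "nat \<Rightarrow> nat \<Rightarrow> nat \<Rightarrow> real"
  assumes sym: "\<And>i j s t. m i j s t = m j i s t"
    and shift_m: "\<And>i j s t. m i j (Suc s) t = m (Suc i) (Suc j) s t"
    and step_m: "\<And>i j s t. m i j s (Suc t) = m i j s t - phi i s t * phi j s t"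
    and shift_phi: "\<And>i s t. phi i (Suc s) t = phi (Suc i) s t"
    and n: "n \<ge> 1"
  shows "4 * (tau m n (s+1) t * tau m n s t - tau m (n+1) s t * tau m (n-1) (s+1) t)
           * (tau m n (s+1) (t+1) * tau m n s (t+1) - tau m (n+1) s (t+1) * tau m (n-1) (s+1) (t+1))
         = (tau m n (s+1) t * tau m n s (t+1) + tau m n (s+1) (t+1) * tau m n s t
            - tau m (n+1) s (t+1) * tau m (n-1) (s+1) t
            - tau m (n+1) s t * tau m (n-1) (s+1) (t+1))^2"
proof -
  let ?G = "Gb m phi n s t"
  let ?G' = "\<lambda>i j. Gb m phi n s t i j - Gb m phi n s t i (Suc n) * Gb m phi n s t (Suc n) j"
  let ?K = "[1..<n]"
  note L = lists_n[OF n]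
  have F: "Fexpr ?G ?K 0 n (Suc n) = 0"
    by (rule core, rule Gb_sym, rule sym, simp)
  have G1: "\<And>i j. i \<le> n \<Longrightarrow> j \<le> n \<Longrightarrow> ?G i j = m i j s t" by (rule Gb_v)
  have G2: "\<And>i j. i \<le> n \<Longrightarrow> j \<le> n \<Longrightarrow> ?G' i j = m i j s (Suc t)" by (simp add: Gb_def step_m)
  have n1: "n - 1 + 1 = n" using n by simp
  have t1: "tau m n s t = minor ?G (?K @ [0])"
  proof -
    have "tau m n s t = minor ?G [0..<n]"
      by (rule tau_shift0[where f="Gb m phi n s t" and m=m and n=n and s'=s and t'=t, OF G1], simp_all)
    also have "\<dots> = minor ?G (?K @ [0])" unfolding L(1) by (rule minor_mset) simp
    finally show ?thesis by simp
  qed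
  have t2: "tau m n (s+1) t = minor ?G (?K @ [n])"
    using tau_shift1[where f="Gb m phi n s t" and m=m and n=n and s'=s and t'=t, OF G1 shift_m, of n] L(2) by simp
  have t3: "tau m (n+1) s t = minor ?G (?K @ [0, n])"
  proof -
    have "tau m (n+1) s t = minor ?G [0..<(n+1)]"
      by (rule tau_shift0[where f="Gb m phi n s t" and m=m and n=n and s'=s and t'=t, OF G1], simp_all)
    also have "\<dots> = minor ?G (?K @ [0, n])" unfolding L(3) by (rule minor_mset) simp
    finally show ?thesis by simp
  qed
  have t4: "tau m (n-1) (s+1) t = minor ?G ?K"
    using tau_shift1[where f="Gb m phi n s t" and m=m and n=n and s'=s and t'=t, OF G1 shift_m, of "n-1"] n1 by simp
  have t5: "tau m n s (t+1) = minor ?G (?K @ [0, Suc n])"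
  proof -
    have "tau m n s (Suc t) = minor ?G' [0..<n]"
      by (rule tau_shift0[where f="\<lambda>i j. Gb m phi n s t i j - Gb m phi n s t i (Suc n) * Gb m phi n s t (Suc n) j" and m=m and n=n and s'=s and t'="Suc t", OF G2], simp_all)
    also have "\<dots> = minor ?G (?K @ [0, Suc n])" unfolding Gb_border unfolding L(1) by (rule minor_mset) simp
    finally show ?thesis by simp
  qed
  have t6: "tau m n (s+1) (t+1) = minor ?G (?K @ [n, Suc n])"
  proof -
    have "tau m n (Suc s) (Suc t) = minor ?G' (?K @ [n])"
      using tau_shift1[where f="\<lambda>i j. Gb m phi n s t i j - Gb m phi n s t i (Suc n) * Gb m phi n s t (Suc n) j" and m=m and n=n and s'=s and t'="Suc t", OF G2 shift_m, of n] L(2) by simp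
    also have "\<dots> = minor ?G (?K @ [n, Suc n])" unfolding Gb_border by (rule minor_mset) simp
    finally show ?thesis by simp
  qed
  have t7: "tau m (n+1) s (t+1) = minor ?G (?K @ [0, n, Suc n])"
  proof -
    have "tau m (n+1) s (Suc t) = minor ?G' [0..<(n+1)]"
      by (rule tau_shift0[where f="\<lambda>i j. Gb m phi n s t i j - Gb m phi n s t i (Suc n) * Gb m phi n s t (Suc n) j" and m=m and n=n and s'=s and t'="Suc t", OF G2], simp_all)
    also have "\<dots> = minor ?G (?K @ [0, n, Suc n])" unfolding Gb_border unfolding L(3) by (rule minor_mset) simp
    finally show ?thesis by simp
  qed
  have t8: "tau m (n-1) (s+1) (t+1) = minor ?G (?K @ [Suc n])"
  proof -
    have "tau m (n-1) (Suc s) (Suc t) = minor ?G' ?K"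
      using tau_shift1[where f="\<lambda>i j. Gb m phi n s t i j - Gb m phi n s t i (Suc n) * Gb m phi n s t (Suc n) j" and m=m and n=n and s'=s and t'="Suc t", OF G2 shift_m, of "n-1"] n1 by simp
    also have "\<dots> = minor ?G (?K @ [Suc n])" unfolding Gb_border by (rule minor_mset) simp
    finally show ?thesis by simp
  qed
  show ?thesis using F unfolding Fexpr_def t1 t2 t3 t4 t5 t6 t7 t8 right_minus_eq .
qed

thm_deps corollary3p5

end
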